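(* Assume the function-class realizability condition below. For any $h\in[H]$ and $N\ge N_{KD}$, there exists $\phi^{(B)}_h\in\Phi_N$ such that for any $x_1',x_2'\in\mathcal{X}_h$, if $\phi^{(B)}_h(x_1')=\phi^{(B)}_h(x_2')$ then $x_1'$ and $x_2'$ are backward kinematically inseparable.
   Context: Block MDP: horizon $H$; finite latent states $\mathcal{S}=\sqcup_h\mathcal{S}_h$; countable observations $\mathcal{X}=\sqcup_h\mathcal{X}_h$; finite actions $\mathcal{A}$; transitions $T(\cdot\mid s,a)\in\Delta(\mathcal{S}_{h+1})$ for $s\in\mathcal{S}_h$; emissions $q(\cdot\mid s)\in\Delta(\mathcal{X}_h)$ with pairwise disjoint supports, decoder $g^\star:\mathcal{X}\to\mathcal{S}$. Observation transitions $T(x'\mid x,a)=q(x'\mid g^\star(x'))T(g^\star(x')\mid g^\star(x),a)$. For full-support $u\in\Delta(\mathcal{X}\times\mathcal{A})$, $\mathbb{P}_u(x,a\mid x')=\frac{T(x'\mid x,a)u(x,a)}{\sum_{\tilde x,\tilde a}T(x'\mid\tilde x,\tilde a)u(\tilde x,\tilde a)}$; $x_1',x_2'$ are backward KI if $\mathbb{P}_u(\cdot\mid x_1')=\mathbb{P}_u(\cdot\mid x_2')$ for every such $u$; forward KI if $T(\cdot\mid x_1,a)=T(\cdot\mid x_2,a)$ for all $a$; KI if both; $N_{KD}$ is the maximum over $h$ of the number of KI equivalence classes within $\mathcal{X}_h$. $\Phi_N$ is a given finite class of maps $\mathcal{X}\to[N]$; $\mathcal{W}_N$ is all functions $[N]\times\mathcal{A}\times[N]\to[0,1]$;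 $\mathcal{F}_N=\{(x,a,x')\mapsto w(\phi^F(x),a,\phi^B(x')):w\in\mathcal{W}_N,\phi^F,\phi^B\in\Phi_N\}$. Realizability: for every $h$, $N\ge N_{KD}$ and every $\rho\in\Delta(\mathcal{S}_h)$ with full support there is $f_\rho\in\mathcal{F}_N$ with $f_\rho(x,a,x')=\frac{T(g^\star(x')\mid g^\star(x),a)}{T(g^\star(x')\mid g^\star(x),a)+\rho(g^\star(x'))}$ for all $x\in\mathcal{X}_{h-1},a\in\mathcal{A},x'\in\mathcal{X}_h$. *)

theory Defs
  imports "HOL-Analysis.Analysis"
begin

text \<open>States have type 's (finite), actions 'a (finite), observations 'x (countable).
  lS s is the layer h of the state s (so S_h = {s. lS s = h}); the layer of an observation x is
  lS (g x), where g is the decoder.  T s a s' is T(s'|s,a); q s x is q(x|s).\<close>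

definition block_mdp ::
  "nat \<Rightarrow> ('s::finite \<Rightarrow> nat) \<Rightarrow> ('s \<Rightarrow> 'a::finite \<Rightarrow> 's \<Rightarrow> real)
   \<Rightarrow> ('s \<Rightarrow> 'x::countable \<Rightarrow> real) \<Rightarrow> ('x \<Rightarrow> 's) \<Rightarrow> bool" where
  "block_mdp H lS T q g \<longleftrightarrow>
     H \<ge> 1 \<and>
     (\<forall>s. 1 \<le> lS s \<and> lS s \<le> H) \<and>
     (\<forall>s a s'. 0 \<le> T s a s') \<and>
     (\<forall>s a. lS s < H \<longrightarrow>
        (\<Sum>s'\<in>{s'. lS s' = lS s + 1}. T s a s') = 1 \<and>
        (\<forall>s'. 0 < T s a s' \<longrightarrow> lS s' = lS s + 1)) \<and>
     (\<forall>s a s'. lS s = H \<longrightarrow> T s a s' = 0) \<and>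
     (\<forall>s x. 0 \<le> q s x) \<and>
     (\<forall>s. (q s has_sum 1) UNIV) \<and>
     (\<forall>x s. 0 < q s x \<longrightarrow> g x = s) \<and>
     (\<forall>x. 0 < q (g x) x)"

definition obs_layer :: "('s \<Rightarrow> nat) \<Rightarrow> ('x \<Rightarrow> 's) \<Rightarrow> nat \<Rightarrow> 'x set" where
  "obs_layer lS g h = {x. lS (g x) = h}"

definition Tobs :: "('s \<Rightarrow> 'a \<Rightarrow> 's \<Rightarrow> real) \<Rightarrow> ('s \<Rightarrow> 'x \<Rightarrow> real) \<Rightarrow> ('x \<Rightarrow> 's)
    \<Rightarrow> 'x \<Rightarrow> 'a \<Rightarrow> 'x \<Rightarrow> real" where
  "Tobs T q g x a x' = q (g x') x' * T (g x) a (g x')"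

definition full_support_dist :: "('b \<Rightarrow> real) \<Rightarrow> bool" where
  "full_support_dist u \<longleftrightarrow> (\<forall>z. 0 < u z) \<and> (u has_sum 1) UNIV"

definition Pu :: "('s \<Rightarrow> 'a \<Rightarrow> 's \<Rightarrow> real) \<Rightarrow> ('s \<Rightarrow> 'x \<Rightarrow> real) \<Rightarrow> ('x \<Rightarrow> 's)
    \<Rightarrow> ('x \<times> 'a \<Rightarrow> real) \<Rightarrow> 'x \<Rightarrow> 'x \<times> 'a \<Rightarrow> real" where
  "Pu T q g u x' = (\<lambda>(x, a). Tobs T q g x a x' * u (x, a) /
       infsum (\<lambda>(y, b). Tobs T q g y b x' * u (y, b)) UNIV)"

definition backward_KI :: "('s \<Rightarrow> 'a \<Rightarrow> 's \<Rightarrow> real) \<Rightarrow> ('s \<Rightarrow> 'x \<Rightarrow> real) \<Rightarrow> ('x \<Rightarrow> 's)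
    \<Rightarrow> 'x \<Rightarrow> 'x \<Rightarrow> bool" where
  "backward_KI T q g x1 x2 \<longleftrightarrow>
     (\<forall>u :: 'x \<times> 'a \<Rightarrow> real. full_support_dist u \<longrightarrow> Pu T q g u x1 = Pu T q g u x2)"

definition forward_KI :: "('s \<Rightarrow> 'a \<Rightarrow> 's \<Rightarrow> real) \<Rightarrow> ('s \<Rightarrow> 'x \<Rightarrow> real) \<Rightarrow> ('x \<Rightarrow> 's)
    \<Rightarrow> 'x \<Rightarrow> 'x \<Rightarrow> bool" where
  "forward_KI T q g x1 x2 \<longleftrightarrow> (\<forall>a. Tobs T q g x1 a = Tobs T q g x2 a)"

definition KI :: "('s \<Rightarrow> 'a \<Rightarrow> 's \<Rightarrow> real) \<Rightarrow> ('s \<Rightarrow> 'x \<Rightarrow> real) \<Rightarrow> ('x \<Rightarrow> 's)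
    \<Rightarrow> 'x \<Rightarrow> 'x \<Rightarrow> bool" where
  "KI T q g x1 x2 \<longleftrightarrow> backward_KI T q g x1 x2 \<and> forward_KI T q g x1 x2"

definition N_KD :: "nat \<Rightarrow> ('s \<Rightarrow> nat) \<Rightarrow> ('s \<Rightarrow> 'a \<Rightarrow> 's \<Rightarrow> real) \<Rightarrow> ('s \<Rightarrow> 'x \<Rightarrow> real)
    \<Rightarrow> ('x \<Rightarrow> 's) \<Rightarrow> nat" where
  "N_KD H lS T q g = Max ((\<lambda>h. card (obs_layer lS g h //
       ({(x1, x2). KI T q g x1 x2} \<inter> (obs_layer lS g h \<times> obs_layer lS g h)))) ` {1..H})"

definition phi_classes :: "(nat \<Rightarrow> ('x \<Rightarrow> nat) set) \<Rightarrow> bool" where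
  "phi_classes Phi \<longleftrightarrow> (\<forall>N. finite (Phi N) \<and> (\<forall>\<phi>\<in>Phi N. \<forall>x. \<phi> x \<in> {1..N}))"

definition Fclass :: "(nat \<Rightarrow> ('x \<Rightarrow> nat) set) \<Rightarrow> nat \<Rightarrow> ('x \<Rightarrow> 'a \<Rightarrow> 'x \<Rightarrow> real) set" where
  "Fclass Phi N = {f. \<exists>w phiF phiB.
      (\<forall>i a j. 0 \<le> w i a j \<and> w i a j \<le> 1) \<and> phiF \<in> Phi N \<and> phiB \<in> Phi N \<and>
      f = (\<lambda>x b y. (w :: nat \<Rightarrow> 'a \<Rightarrow> nat \<Rightarrow> real) (phiF x) b (phiB y))
    }"

definition realizable :: "nat \<Rightarrow> ('s::finite \<Rightarrow> nat) \<Rightarrow> ('s \<Rightarrow> 'a::finite \<Rightarrow> 's \<Rightarrow> real)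
    \<Rightarrow> ('s \<Rightarrow> 'x::countable \<Rightarrow> real) \<Rightarrow> ('x \<Rightarrow> 's) \<Rightarrow> (nat \<Rightarrow> ('x \<Rightarrow> nat) set) \<Rightarrow> bool" where
  "realizable H lS T q g Phi \<longleftrightarrow>
     (\<forall>h \<in> {1..H}. \<forall>N \<ge> N_KD H lS T q g. \<forall>\<rho> :: 's \<Rightarrow> real.
        ((\<forall>s. lS s = h \<longrightarrow> 0 < \<rho> s) \<and> (\<forall>s. lS s \<noteq> h \<longrightarrow> \<rho> s = 0) \<and>
         (\<Sum>s\<in>{s. lS s = h}. \<rho> s) = 1) \<longrightarrow>
        (\<exists>f \<in> Fclass Phi N. \<forall>x a x'. lS (g x) = h - 1 \<longrightarrow> lS (g x') = h \<longrightarrow>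
           f x a x' = T (g x) a (g x') / (T (g x) a (g x') + \<rho> (g x'))))"

end

theory Submission
  imports Defs
begin

lemma pu_eq_lemma:
  fixes T :: "'s \<Rightarrow> 'a \<Rightarrow> 's \<Rightarrow> real" and q :: "'s \<Rightarrow> 'x \<Rightarrow> real" and g :: "'x \<Rightarrow> 's"
  assumes q1: "q (g x1) x1 \<noteq> 0" and q2: "q (g x2) x2 \<noteq> 0"
    and TT: "\<And>y b. T (g y) b (g x1) = T (g y) b (g x2)"
  shows "Pu T q g u x1 = Pu T q g u x2"
proof -
  define A where "A = (\<lambda>(y, b). T (g y) b (g x1) * u (y, b))"
  have e1: "(\<lambda>(y, b). Tobs T q g y b x1 * u (y, b)) = (\<lambda>z. q (g x1) x1 * A z)"
    by (auto simp: Tobs_def A_def)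
  have e2: "(\<lambda>(y, b). Tobs T q g y b x2 * u (y, b)) = (\<lambda>z. q (g x2) x2 * A z)"
    by (auto simp: Tobs_def A_def TT)
  show ?thesis
  proof
    fix z :: "'x \<times> 'a"
    obtain y b where z: "z = (y, b)" by force
    have a1: "Tobs T q g y b x1 * u (y, b) = q (g x1) x1 * A (y,b)"
      by (simp add: Tobs_def A_def)
    have a2: "Tobs T q g y b x2 * u (y, b) = q (g x2) x2 * A (y,b)"
      by (simp add: Tobs_def A_def TT)
    show "Pu T q g u x1 z = Pu T q g u x2 z"
      unfolding Pu_def z e1 e2 infsum_cmult_right' using a1 a2 q1 q2
      by simp
  qed
qed

theorem mainTheorem8:
  fixes H :: nat and lS :: "'s::finite \<Rightarrow> nat" and T :: "'s \<Rightarrow> 'a::finite \<Rightarrow> 's \<Rightarrow> real"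
    and q :: "'s \<Rightarrow> 'x::countable \<Rightarrow> real" and g :: "'x \<Rightarrow> 's"
    and Phi :: "nat \<Rightarrow> ('x \<Rightarrow> nat) set" and h N :: nat
  assumes "block_mdp H lS T q g"
    and "phi_classes Phi"
    and "realizable H lS T q g Phi"
    and "h \<in> {1..H}"
    and "N \<ge> N_KD H lS T q g"
  shows "\<exists>phiB \<in> Phi N. \<forall>x1 x2. x1 \<in> obs_layer lS g h \<longrightarrow> x2 \<in> obs_layer lS g h \<longrightarrow>
           phiB x1 = phiB x2 \<longrightarrow> backward_KI T q g x1 x2"
proof -
  note bm = assms(1)[unfolded block_mdp_def]
  define h0 where "h0 = (if \<exists>s. lS s = h then h else lS undefined)"
  have h0: "h0 \<in> {1..H}" using assms(4) bm by (auto simp: h0_def)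
  have ne: "\<exists>s. lS s = h0" by (auto simp: h0_def)
  define L where "L = {s. lS s = h0}"
  have Lfin: "finite L" by simp
  have Lne: "L \<noteq> {}" using ne by (auto simp: L_def)
  have cpos: "card L > 0" using Lfin Lne by (simp add: card_gt_0_iff)
  define c where "c = 1 / real (card L)"
  have c0: "c > 0" using cpos by (simp add: c_def)
  define \<rho> where "\<rho> = (\<lambda>s. if lS s = h0 then c else 0)"
  have rsum: "(\<Sum>s\<in>{s. lS s = h0}. \<rho> s) = 1"
  proof -
    have "(\<Sum>s\<in>{s. lS s = h0}. \<rho> s) = (\<Sum>s\<in>L. c)" unfolding L_def \<rho>_def by simp
    also have "\<dots> = 1" using cpos Lne by (simp add: c_def)
    finally show ?thesis .
  qed
  have "\<exists>f \<in> Fclass Phi N. \<forall>x a x'. lS (g x) = h0 - 1 \<longrightarrow> lS (g x') = h0 \<longrightarrow>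
           f x a x' = T (g x) a (g x') / (T (g x) a (g x') + \<rho> (g x'))"
  proof -
    have R: "\<forall>h \<in> {1..H}. \<forall>N \<ge> N_KD H lS T q g. \<forall>\<rho> :: 's \<Rightarrow> real.
        ((\<forall>s. lS s = h \<longrightarrow> 0 < \<rho> s) \<and> (\<forall>s. lS s \<noteq> h \<longrightarrow> \<rho> s = 0) \<and>
         (\<Sum>s\<in>{s. lS s = h}. \<rho> s) = 1) \<longrightarrow>
        (\<exists>f \<in> Fclass Phi N. \<forall>x a x'. lS (g x) = h - 1 \<longrightarrow> lS (g x') = h \<longrightarrow>
           f x a x' = T (g x) a (g x') / (T (g x) a (g x') + \<rho> (g x')))"
      using assms(3) unfolding realizable_def by blast
    have P: "(\<forall>s. lS s = h0 \<longrightarrow> 0 < \<rho> s) \<and> (\<forall>s. lS s \<noteq> h0 \<longrightarrow> \<rho> s = 0)"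
      using c0 by (simp add: \<rho>_def)
    show ?thesis using R h0 assms(5) P rsum by blast
  qed
  then obtain f where fF: "f \<in> Fclass Phi N" and fr: "\<And>x a x'. lS (g x) = h0 - 1 \<Longrightarrow> lS (g x') = h0 \<Longrightarrow>
           f x a x' = T (g x) a (g x') / (T (g x) a (g x') + \<rho> (g x'))" by blast
  obtain w :: "nat \<Rightarrow> 'a \<Rightarrow> nat \<Rightarrow> real" and phiF phiB :: "'x \<Rightarrow> nat" where phiB: "phiB \<in> Phi N" and fdef: "f = (\<lambda>x b y. w (phiF x) b (phiB y))"
    using fF unfolding Fclass_def mem_Collect_eq by (elim exE conjE) blast
  show ?thesis
  proof (intro bexI[OF _ phiB] allI impI)
    fix x1 x2
    assume x1: "x1 \<in> obs_layer lS g h" and x2: "x2 \<in> obs_layer lS g h" and eq: "phiB x1 = phiB x2"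
    have l1: "lS (g x1) = h" and l2: "lS (g x2) = h" using x1 x2 by (auto simp: obs_layer_def)
    have hh: "h0 = h" using l1 by (auto simp: h0_def)
    have TT: "T (g y) b (g x1) = T (g y) b (g x2)" for y b
    proof (cases "lS (g y) = h - 1")
      case True
      have "f y b x1 = f y b x2" using eq by (simp add: fdef)
      hence "T (g y) b (g x1) / (T (g y) b (g x1) + c) = T (g y) b (g x2) / (T (g y) b (g x2) + c)"
        using fr[of y x1 b] fr[of y x2 b] True l1 l2 hh by (simp add: \<rho>_def)
      moreover have "T (g y) b (g x1) \<ge> 0" "T (g y) b (g x2) \<ge> 0" using bm by auto
      ultimately have "T (g y) b (g x1) * (T (g y) b (g x2) + c) = T (g y) b (g x2) * (T (g y) b (g x1) + c)"
        using c0 by (simp add: divide_simps split: if_splits)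
      hence "T (g y) b (g x1) * c = T (g y) b (g x2) * c" by (simp add: algebra_simps)
      thus ?thesis using c0 by simp
    next
      case False
      have z: "T (g y) b s = 0" if "lS s = h" for s
      proof (cases "lS (g y) < H")
        case True
        hence "0 < T (g y) b s \<longrightarrow> lS s = lS (g y) + 1" using bm by blast
        moreover have "T (g y) b s \<ge> 0" using bm by auto
        ultimately show ?thesis using False that by fastforce
      next
        case F2: False
        hence "lS (g y) = H" using bm by (meson le_neq_implies_less)
        thus ?thesis using bm by blast
      qed
      show ?thesis using z[OF l1] z[OF l2] by simp
    qed
    have q1: "q (g x1) x1 \<noteq> 0" and q2: "q (g x2) x2 \<noteq> 0" using bm by (metis less_irrefl)+
    show "backward_KI T q g x1 x2"
      unfolding backward_KI_def using pu_eq_lemma[of q g x1 x2 T, OF q1 q2 TT] by blast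
  qed
qed

end
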